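(* Let $G$ be a finite group, $H\trianglelefteq G$ a normal subgroup and $g,h\in G$. Then (i) $\eta_g(\eta_g(H))=\eta_g(H)$; (ii) $\eta_{gh}(H)\le\eta_g(H)\eta_h(H)$; (iii) $\mathrm{FitL}(\eta_{gh}(H))\le\max\{\mathrm{FitL}(\eta_g(H)),\mathrm{FitL}(\eta_h(H))\}$.
   Context: Commutators: $[x,y]=x^{-1}y^{-1}xy$, $x^y=y^{-1}xy$; for subsets $X,Y\subseteq G$, $[X,Y]$ is the subgroup generated by all $[x,y]$, and $[X,{}_kY]=[\cdots[[X,Y],Y]\cdots,Y]$ with $k$ copies of $Y$. $g^G=\{g^x:x\in G\}$. Fix $M\in\mathbb{N}$ such that $[X,{}_MY]=[X,{}_iY]$ for all $i\ge M$ and all $X,Y\subseteq G$ with $X^G=X$, $Y^G=Y$. For $H\trianglelefteq G$ and $g\in G$, $\eta_g(H)=[H,{}_M\,g^G]$ (a normal subgroup of $G$ contained in $H$). $\mathrm{FitL}(A)$ denotes the Fitting length of a finite group $A$: the least $d$ such that there is a series $1=A_0\trianglelefteq\cdots\trianglelefteq A_d=A$ with nilpotent quotients (taken as $\infty$ if no such series exists). *)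

theory Defs
  imports "HOL-Algebra.Algebra" "HOL-Library.Extended_Nat"
begin

definition gcomm :: "('a, 'b) monoid_scheme \<Rightarrow> 'a \<Rightarrow> 'a \<Rightarrow> 'a" where
  "gcomm G x y = inv\<^bsub>G\<^esub> x \<otimes>\<^bsub>G\<^esub> inv\<^bsub>G\<^esub> y \<otimes>\<^bsub>G\<^esub> x \<otimes>\<^bsub>G\<^esub> y"

definition comm_sg :: "('a, 'b) monoid_scheme \<Rightarrow> 'a set \<Rightarrow> 'a set \<Rightarrow> 'a set" where
  "comm_sg G S T = generate G {z. \<exists>x\<in>S. \<exists>y\<in>T. z = gcomm G x y}"

fun iter_comm :: "('a, 'b) monoid_scheme \<Rightarrow> 'a set \<Rightarrow> 'a set \<Rightarrow> nat \<Rightarrow> 'a set" where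
  "iter_comm G S T 0 = S"
| "iter_comm G S T (Suc k) = comm_sg G (iter_comm G S T k) T"

definition conj_class :: "('a, 'b) monoid_scheme \<Rightarrow> 'a \<Rightarrow> 'a set" where
  "conj_class G g = {inv\<^bsub>G\<^esub> x \<otimes>\<^bsub>G\<^esub> g \<otimes>\<^bsub>G\<^esub> x | x. x \<in> carrier G}"

definition conj_set :: "('a, 'b) monoid_scheme \<Rightarrow> 'a set \<Rightarrow> 'a set" where
  "conj_set G S = {inv\<^bsub>G\<^esub> y \<otimes>\<^bsub>G\<^esub> x \<otimes>\<^bsub>G\<^esub> y | x y. x \<in> S \<and> y \<in> carrier G}"

definition stab_const :: "('a, 'b) monoid_scheme \<Rightarrow> nat \<Rightarrow> bool" where
  "stab_const G M \<longleftrightarrow> (\<forall>S T i. S \<subseteq> carrier G \<longrightarrow> T \<subseteq> carrier G \<longrightarrow>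
      conj_set G S = S \<longrightarrow> conj_set G T = T \<longrightarrow> M \<le> i \<longrightarrow>
      iter_comm G S T M = iter_comm G S T i)"

definition eta :: "('a, 'b) monoid_scheme \<Rightarrow> nat \<Rightarrow> 'a \<Rightarrow> 'a set \<Rightarrow> 'a set" where
  "eta G M g H = iter_comm G H (conj_class G g) M"

fun lcs :: "('a, 'b) monoid_scheme \<Rightarrow> nat \<Rightarrow> 'a set" where
  "lcs G 0 = carrier G"
| "lcs G (Suc k) = comm_sg G (lcs G k) (carrier G)"

definition nilpotent_grp :: "('a, 'b) monoid_scheme \<Rightarrow> bool" where
  "nilpotent_grp G \<longleftrightarrow> group G \<and> (\<exists>k. lcs G k = {\<one>\<^bsub>G\<^esub>})"

definition nil_series :: "('a, 'b) monoid_scheme \<Rightarrow> (nat \<Rightarrow> 'a set) \<Rightarrow> nat \<Rightarrow> bool" where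
  "nil_series G A d \<longleftrightarrow> A 0 = {\<one>\<^bsub>G\<^esub>} \<and> A d = carrier G \<and>
     (\<forall>i\<le>d. subgroup (A i) G) \<and>
     (\<forall>i<d. A i \<lhd> G\<lparr>carrier := A (Suc i)\<rparr> \<and>
            nilpotent_grp (G\<lparr>carrier := A (Suc i)\<rparr> Mod A i))"

definition FitL :: "('a, 'b) monoid_scheme \<Rightarrow> enat" where
  "FitL G = (if \<exists>d A. nil_series G A d then enat (LEAST d. \<exists>A. nil_series G A d) else \<infinity>)"

end

theory Submission
  imports Defs
begin

definition rho :: "('a, 'b) monoid_scheme \<Rightarrow> nat \<Rightarrow> 'a set \<Rightarrow> 'a set" where
  "rho G M Z = iter_comm G Z Z M"

context group begin

definition ncl :: "'a set \<Rightarrow> bool" where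
  "ncl Z \<longleftrightarrow> (\<forall>x\<in>Z. \<forall>y\<in>carrier G. y \<otimes> x \<otimes> inv y \<in> Z)"

lemma cancel1[simp]: "x \<in> carrier G \<Longrightarrow> z \<in> carrier G \<Longrightarrow> inv x \<otimes> (x \<otimes> z) = z"
  by (simp add: m_assoc[symmetric])
lemma cancel2[simp]: "x \<in> carrier G \<Longrightarrow> z \<in> carrier G \<Longrightarrow> x \<otimes> (inv x \<otimes> z) = z"
  by (simp add: m_assoc[symmetric])

lemma gcomm_carrier[simp]: "x \<in> carrier G \<Longrightarrow> y \<in> carrier G \<Longrightarrow> gcomm G x y \<in> carrier G"
  unfolding gcomm_def by simp

lemma gcomm_conj:
  assumes "g \<in> carrier G" "x \<in> carrier G" "t \<in> carrier G"
  shows "g \<otimes> gcomm G x t \<otimes> inv g = gcomm G (g \<otimes> x \<otimes> inv g) (g \<otimes> t \<otimes> inv g)"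
  using assms by (simp add: gcomm_def m_assoc inv_mult_group)

lemma gcomm_one: "t \<in> carrier G \<Longrightarrow> gcomm G \<one> t = \<one>"
  by (simp add: gcomm_def m_assoc)

lemma gcomm_inv:
  assumes "u \<in> carrier G" "t \<in> carrier G"
  shows "gcomm G (inv u) t = u \<otimes> inv (gcomm G u t) \<otimes> inv u"
  using assms by (simp add: gcomm_def m_assoc inv_mult_group)

lemma gcomm_mult1:
  assumes "a \<in> carrier G" "b \<in> carrier G" "t \<in> carrier G"
  shows "gcomm G (a \<otimes> b) t = inv b \<otimes> gcomm G a t \<otimes> inv (inv b) \<otimes> gcomm G b t"
  using assms by (simp add: gcomm_def m_assoc inv_mult_group)

lemma gcomm_mult2:
  assumes "x \<in> carrier G" "c \<in> carrier G" "d \<in> carrier G"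
  shows "gcomm G x (c \<otimes> d) = gcomm G x d \<otimes> (inv d \<otimes> gcomm G x c \<otimes> inv (inv d))"
  using assms by (simp add: gcomm_def m_assoc inv_mult_group)



lemma normal_conj2:
  assumes "N \<lhd> G" "x \<in> N" "y \<in> carrier G" shows "y \<otimes> x \<otimes> inv y \<in> N"
  using normal.inv_op_closed2[OF assms(1) assms(3) assms(2)] .

lemma normal_conj:
  assumes "N \<lhd> G" "x \<in> N" "y \<in> carrier G" shows "inv y \<otimes> x \<otimes> y \<in> N"
  using normal.inv_op_closed1[OF assms(1) assms(3) assms(2)] .

lemma normal_ncl: "N \<lhd> G \<Longrightarrow> ncl N"
  unfolding ncl_def using normal_conj2 by simp

lemma ncl_normal:
  assumes "subgroup N G" "ncl N" shows "N \<lhd> G"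
proof (rule normal_invI[OF assms(1)])
  fix x h assume "x \<in> carrier G" "h \<in> N"
  then show "x \<otimes> h \<otimes> inv x \<in> N" using assms(2) unfolding ncl_def by blast
qed

lemma ncl_conj: "ncl N \<Longrightarrow> x \<in> N \<Longrightarrow> y \<in> carrier G \<Longrightarrow> inv y \<otimes> x \<otimes> y \<in> N"
proof -
  assume a: "ncl N" "x \<in> N" "y \<in> carrier G"
  have "inv y \<in> carrier G" using a(3) by simp
  then have "inv y \<otimes> x \<otimes> inv (inv y) \<in> N" using a unfolding ncl_def by blast
  then show ?thesis using a(3) by simp
qed

lemma gcomm_in_normal:
  assumes N: "N \<lhd> G" and x: "x \<in> N" and d: "d \<in> carrier G"
  shows "gcomm G x d \<in> N"
proof -
  have sg: "subgroup N G" using N by (rule normal_imp_subgroup)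
  have xc: "x \<in> carrier G" using subgroup.mem_carrier[OF sg x] .
  have e: "gcomm G x d = inv x \<otimes> (inv d \<otimes> x \<otimes> d)"
    using xc d by (simp add: gcomm_def m_assoc)
  have 1: "inv d \<otimes> x \<otimes> d \<in> N" using normal_conj[OF N x d] .
  have 2: "inv x \<in> N" using subgroup.m_inv_closed[OF sg x] .
  show ?thesis unfolding e using subgroup.m_closed[OF sg 2 1] .
qed

lemma gcomm_in_normal2:
  assumes N: "N \<lhd> G" and x: "x \<in> carrier G" and t: "t \<in> N"
  shows "gcomm G x t \<in> N"
proof -
  have sg: "subgroup N G" using N by (rule normal_imp_subgroup)
  have tc: "t \<in> carrier G" using subgroup.mem_carrier[OF sg t] .
  have e: "gcomm G x t = (inv x \<otimes> inv t \<otimes> x) \<otimes> t"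
    using tc x by (simp add: gcomm_def m_assoc)
  have 1: "inv x \<otimes> inv t \<otimes> x \<in> N" using normal_conj[OF N subgroup.m_inv_closed[OF sg t] x] .
  show ?thesis unfolding e using subgroup.m_closed[OF sg 1 t] .
qed

lemma comm_sg_normal:
  assumes "S \<subseteq> carrier G" "ncl S" "T \<subseteq> carrier G" "ncl T"
  shows "comm_sg G S T \<lhd> G"
  unfolding comm_sg_def
proof (rule normal_generateI)
  show "{z. \<exists>x\<in>S. \<exists>y\<in>T. z = gcomm G x y} \<subseteq> carrier G" using assms gcomm_carrier by blast
  fix h g assume h: "h \<in> {z. \<exists>x\<in>S. \<exists>y\<in>T. z = gcomm G x y}" and g: "g \<in> carrier G"
  then obtain x y where xy: "x \<in> S" "y \<in> T" "h = gcomm G x y" by blast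
  have "g \<otimes> h \<otimes> inv g = gcomm G (g \<otimes> x \<otimes> inv g) (g \<otimes> y \<otimes> inv g)"
    using xy assms g gcomm_conj by blast
  moreover have "g \<otimes> x \<otimes> inv g \<in> S" "g \<otimes> y \<otimes> inv g \<in> T"
    using assms xy g unfolding ncl_def by auto
  ultimately show "g \<otimes> h \<otimes> inv g \<in> {z. \<exists>x\<in>S. \<exists>y\<in>T. z = gcomm G x y}" by blast
qed

lemma normal_sub: "N \<lhd> G \<Longrightarrow> N \<subseteq> carrier G"
  using normal_imp_subgroup subgroup.subset by blast

lemma iter_comm_normal:
  assumes "N \<lhd> G" "T \<subseteq> carrier G" "ncl T"
  shows "iter_comm G N T n \<lhd> G"
proof (induction n)
  case 0 then show ?case using assms by simp
next
  case (Suc n) then show ?case using assms comm_sg_normal normal_sub normal_ncl by simp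
qed

lemma gen_comm_sub:
  assumes L: "L \<lhd> G" and U: "U \<subseteq> carrier G" and T: "T \<subseteq> carrier G"
    and h: "\<And>u t. u \<in> U \<Longrightarrow> t \<in> T \<Longrightarrow> gcomm G u t \<in> L"
  shows "comm_sg G (generate G U) T \<subseteq> L"
  unfolding comm_sg_def
proof (rule generate_subgroup_incl)
  have sg: "subgroup L G" using L by (rule normal_imp_subgroup)
  then show "subgroup L G" .
  have "gcomm G x t \<in> L" if x: "x \<in> generate G U" and t: "t \<in> T" for x t
    using x
  proof (induction rule: generate.induct)
    case one
    have "t \<in> carrier G" using t T by blast
    then have "gcomm G \<one> t = \<one>" by (rule gcomm_one)
    then show ?case using subgroup.one_closed[OF sg] by simp
  next
    case (incl u) then show ?case using h t by blast
  next
    case (inv u)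
    have uc: "u \<in> carrier G" "t \<in> carrier G" using inv U t T by auto
    have e: "gcomm G (inv u) t = u \<otimes> inv (gcomm G u t) \<otimes> inv u" using gcomm_inv[OF uc] .
    have "inv (gcomm G u t) \<in> L" using subgroup.m_inv_closed[OF sg h[OF inv t]] .
    then show ?case unfolding e using normal_conj2[OF L _ uc(1)] by blast
  next
    case (eng a b)
    have c: "a \<in> carrier G" "b \<in> carrier G" "t \<in> carrier G"
      using eng(1,2) U generate_in_carrier t T by auto
    have e: "gcomm G (a \<otimes> b) t = inv b \<otimes> gcomm G a t \<otimes> inv (inv b) \<otimes> gcomm G b t"
      using gcomm_mult1[OF c] .
    have 1: "inv b \<otimes> gcomm G a t \<otimes> inv (inv b) \<in> L"
      using normal_conj2[OF L eng(3)] c(2) by blast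
    show ?case unfolding e using subgroup.m_closed[OF sg 1 eng(4)] .
  qed
  then show "{z. \<exists>x\<in>generate G U. \<exists>y\<in>T. z = gcomm G x y} \<subseteq> L" by blast
qed

lemma comm_sg_mono: "S \<subseteq> S' \<Longrightarrow> T \<subseteq> T' \<Longrightarrow> comm_sg G S T \<subseteq> comm_sg G S' T'"
  unfolding comm_sg_def by (rule mono_generate) blast

lemma iter_comm_mono: "S \<subseteq> S' \<Longrightarrow> T \<subseteq> T' \<Longrightarrow> iter_comm G S T n \<subseteq> iter_comm G S' T' n"
  by (induction n) (simp_all add: comm_sg_mono)

lemma iter_comm_add: "iter_comm G (iter_comm G S T a) T b = iter_comm G S T (b + a)"
  by (induction b) auto

lemma conj_set_eq: "Z \<subseteq> carrier G \<Longrightarrow> ncl Z \<Longrightarrow> conj_set G Z = Z"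
  unfolding conj_set_def
proof safe
  fix x y assume "Z \<subseteq> carrier G" "ncl Z" "x \<in> Z" "y \<in> carrier G"
  then show "inv y \<otimes> x \<otimes> y \<in> Z" using ncl_conj by blast
next
  fix x assume "Z \<subseteq> carrier G" "x \<in> Z"
  then have "x = inv \<one> \<otimes> x \<otimes> \<one>" by auto
  then show "\<exists>xa y. x = inv y \<otimes> xa \<otimes> y \<and> xa \<in> Z \<and> y \<in> carrier G" using \<open>x \<in> Z\<close> by blast
qed

lemma conj_class_sub: "g \<in> carrier G \<Longrightarrow> conj_class G g \<subseteq> carrier G"
  unfolding conj_class_def by auto

lemma conj_class_ncl: "g \<in> carrier G \<Longrightarrow> ncl (conj_class G g)"
  unfolding conj_class_def ncl_def
proof safe
  fix x y assume "g \<in> carrier G" "x \<in> carrier G" "y \<in> carrier G"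
  then have "y \<otimes> (inv x \<otimes> g \<otimes> x) \<otimes> inv y = inv (x \<otimes> inv y) \<otimes> g \<otimes> (x \<otimes> inv y)"
    by (simp add: m_assoc inv_mult_group)
  then show "\<exists>xa. y \<otimes> (inv x \<otimes> g \<otimes> x) \<otimes> inv y = inv xa \<otimes> g \<otimes> xa \<and> xa \<in> carrier G"
    using \<open>x \<in> carrier G\<close> \<open>y \<in> carrier G\<close> by blast
qed


lemma union_normal_gen:
  assumes "\<And>a. P a \<lhd> G" "\<And>b. Q b \<lhd> G"
  shows "generate G (\<Union>{P a \<inter> Q b | a b. a + b = m}) \<lhd> G"
proof (rule normal_generateI)
  show "\<Union>{P a \<inter> Q b | a b. a + b = m} \<subseteq> carrier G" using assms normal_sub by blast
  fix h g assume "h \<in> \<Union>{P a \<inter> Q b | a b. a + b = m}" "g \<in> carrier G"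
  then obtain a b where "a + b = m" "h \<in> P a" "h \<in> Q b" by blast
  then have "g \<otimes> h \<otimes> inv g \<in> P a \<inter> Q b" using assms normal_conj2 \<open>g \<in> carrier G\<close> by blast
  then show "g \<otimes> h \<otimes> inv g \<in> \<Union>{P a \<inter> Q b | a b. a + b = m}" using \<open>a + b = m\<close> by blast
qed

lemma word_lemma:
  fixes P Q :: "nat \<Rightarrow> 'a set"
  assumes PN: "\<And>a. P a \<lhd> G" and QN: "\<And>b. Q b \<lhd> G"
   and T1: "T1 \<subseteq> carrier G" and T2: "T2 \<subseteq> carrier G"
   and hP: "\<And>a x t. x \<in> P a \<Longrightarrow> t \<in> T1 \<Longrightarrow> gcomm G x t \<in> P (Suc a)"
   and hQ: "\<And>b x t. x \<in> Q b \<Longrightarrow> t \<in> T2 \<Longrightarrow> gcomm G x t \<in> Q (Suc b)"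
   and hT: "\<And>t. t \<in> T \<Longrightarrow> \<exists>c\<in>T1. \<exists>d\<in>T2. t = c \<otimes> d"
   and S: "S \<subseteq> generate G (\<Union>{P a \<inter> Q b | a b. a + b = k})"
  shows "iter_comm G S T n \<subseteq> generate G (\<Union>{P a \<inter> Q b | a b. a + b = k + n})"
proof (induction n)
  case 0 then show ?case using S by simp
next
  case (Suc n)
  let ?U = "\<Union>{P a \<inter> Q b | a b. a + b = k + n}"
  let ?V = "\<Union>{P a \<inter> Q b | a b. a + b = k + Suc n}"
  let ?J = "generate G ?V"
  have Tc: "T \<subseteq> carrier G"
  proof
    fix t assume "t \<in> T"
    then obtain c d where "c \<in> T1" "d \<in> T2" "t = c \<otimes> d" using hT by blast
    then show "t \<in> carrier G" using T1 T2 by auto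
  qed
  have Uc: "?U \<subseteq> carrier G"
  proof
    fix x assume "x \<in> ?U"
    then obtain a b where "x \<in> P a" by blast
    then show "x \<in> carrier G" using normal_sub[OF PN] by auto
  qed
  have JN: "?J \<lhd> G" using union_normal_gen[of P Q, OF PN QN] .
  have Jsg: "subgroup ?J G" using JN by (rule normal_imp_subgroup)
  have VJ: "\<And>x a b. x \<in> P a \<Longrightarrow> x \<in> Q b \<Longrightarrow> a + b = k + Suc n \<Longrightarrow> x \<in> ?J"
  proof -
    fix x a b assume "x \<in> P a" "x \<in> Q b" "a + b = k + Suc n"
    then have "x \<in> ?V" by blast
    then show "x \<in> ?J" by (rule generate.incl)
  qed
  have "iter_comm G S T (Suc n) = comm_sg G (iter_comm G S T n) T" by simp
  also have "\<dots> \<subseteq> comm_sg G (generate G ?U) T"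
    using Suc comm_sg_mono by blast
  also have "\<dots> \<subseteq> ?J"
  proof (rule gen_comm_sub[OF JN Uc Tc])
    fix u t assume u: "u \<in> ?U" and t: "t \<in> T"
    then obtain a b where ab: "a + b = k + n" "u \<in> P a" "u \<in> Q b" by blast
    obtain c d where cd: "c \<in> T1" "d \<in> T2" "t = c \<otimes> d" using hT t by blast
    have cc: "c \<in> carrier G" "d \<in> carrier G" "u \<in> carrier G"
      using cd(1,2) T1 T2 normal_sub[OF PN] ab(2) by auto
    have e: "gcomm G u t = gcomm G u d \<otimes> (inv d \<otimes> gcomm G u c \<otimes> inv (inv d))"
      unfolding cd(3) using gcomm_mult2[OF cc(3) cc(1) cc(2)] .
    have "gcomm G u d \<in> P a" using gcomm_in_normal[OF PN ab(2) cc(2)] .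
    moreover have "gcomm G u d \<in> Q (Suc b)" using hQ[OF ab(3) cd(2)] .
    moreover have "a + Suc b = k + Suc n" using ab by simp
    ultimately have 1: "gcomm G u d \<in> ?J" by (rule VJ)
    have "gcomm G u c \<in> P (Suc a)" using hP[OF ab(2) cd(1)] .
    moreover have "gcomm G u c \<in> Q b" using gcomm_in_normal[OF QN ab(3) cc(1)] .
    moreover have "Suc a + b = k + Suc n" using ab by simp
    ultimately have "gcomm G u c \<in> ?J" by (rule VJ)
    then have 2: "inv d \<otimes> gcomm G u c \<otimes> inv (inv d) \<in> ?J"
      using normal_conj2[OF JN _ inv_closed[OF cc(2)]] by blast
    show "gcomm G u t \<in> ?J" unfolding e using subgroup.m_closed[OF Jsg 1 2] .
  qed
  finally show ?case .
qed

lemma stab_use: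
  assumes "stab_const G M" "S \<subseteq> carrier G" "ncl S" "T \<subseteq> carrier G" "ncl T" "M \<le> i"
  shows "iter_comm G S T i = iter_comm G S T M"
proof -
  have cS: "conj_set G S = S" using conj_set_eq assms(2,3) by blast
  have cT: "conj_set G T = T" using conj_set_eq assms(4,5) by blast
  have "\<forall>S T i. S \<subseteq> carrier G \<longrightarrow> T \<subseteq> carrier G \<longrightarrow>
      conj_set G S = S \<longrightarrow> conj_set G T = T \<longrightarrow> M \<le> i \<longrightarrow>
      iter_comm G S T M = iter_comm G S T i" using assms(1) unfolding stab_const_def .
  then have "iter_comm G S T M = iter_comm G S T i" using assms(2,4,6) cS cT by blast
  then show ?thesis by simp
qed

lemma set_mult_memI: "x \<in> A \<Longrightarrow> y \<in> B \<Longrightarrow> x \<otimes> y \<in> A <#> B"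
  unfolding set_mult_def by blast

lemma part1:
  assumes "H \<lhd> G" "g \<in> carrier G" "stab_const G M"
  shows "eta G M g (eta G M g H) = eta G M g H"
proof -
  have "eta G M g (eta G M g H) = iter_comm G H (conj_class G g) (M + M)"
    unfolding eta_def iter_comm_add by simp
  also have "\<dots> = eta G M g H" unfolding eta_def
    by (rule stab_use) (use assms normal_sub normal_ncl conj_class_sub conj_class_ncl in auto)
  finally show ?thesis .
qed

lemma part2:
  assumes HN: "H \<lhd> G" and g: "g \<in> carrier G" and h: "h \<in> carrier G" and st: "stab_const G M"
  shows "eta G M (g \<otimes> h) H \<subseteq> eta G M g H <#> eta G M h H"
proof -
  define Cg where "Cg = conj_class G g"
  define Ch where "Ch = conj_class G h"
  define D where "D = conj_class G (g \<otimes> h)"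
  define P where "P = (\<lambda>a. iter_comm G H Cg a)"
  define Q where "Q = (\<lambda>a. iter_comm G H Ch a)"
  have Cgc: "Cg \<subseteq> carrier G" "ncl Cg" unfolding Cg_def using g conj_class_sub conj_class_ncl by auto
  have Chc: "Ch \<subseteq> carrier G" "ncl Ch" unfolding Ch_def using h conj_class_sub conj_class_ncl by auto
  have Dc: "D \<subseteq> carrier G" "ncl D" unfolding D_def using g h conj_class_sub conj_class_ncl by auto
  have Hc: "H \<subseteq> carrier G" "ncl H" using HN normal_sub normal_ncl by auto
  have PN: "\<And>a. P a \<lhd> G" unfolding P_def using iter_comm_normal HN Cgc by blast
  have QN: "\<And>a. Q a \<lhd> G" unfolding Q_def using iter_comm_normal HN Chc by blast
  let ?A = "eta G M g H" and ?B = "eta G M h H"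
  have AN: "?A \<lhd> G" "?B \<lhd> G" unfolding eta_def using iter_comm_normal HN g h conj_class_sub conj_class_ncl by auto
  have ABsg: "subgroup (?A <#> ?B) G"
    using normal_subgroup_set_mult_closed[OF AN] normal_imp_subgroup by blast
  have hP: "\<And>a x t. x \<in> P a \<Longrightarrow> t \<in> Cg \<Longrightarrow> gcomm G x t \<in> P (Suc a)"
    unfolding P_def by (auto simp: comm_sg_def intro: generate.incl)
  have hQ: "\<And>a x t. x \<in> Q a \<Longrightarrow> t \<in> Ch \<Longrightarrow> gcomm G x t \<in> Q (Suc a)"
    unfolding Q_def by (auto simp: comm_sg_def intro: generate.incl)
  have hT: "\<exists>c\<in>Cg. \<exists>d\<in>Ch. t = c \<otimes> d" if "t \<in> D" for t
  proof -
    obtain y where y: "y \<in> carrier G" "t = inv y \<otimes> (g \<otimes> h) \<otimes> y" using \<open>t \<in> D\<close> unfolding D_def conj_class_def by blast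
    have "t = (inv y \<otimes> g \<otimes> y) \<otimes> (inv y \<otimes> h \<otimes> y)" using y g h by (simp add: m_assoc)
    moreover have "inv y \<otimes> g \<otimes> y \<in> Cg" "inv y \<otimes> h \<otimes> y \<in> Ch"
      unfolding Cg_def Ch_def conj_class_def using y by blast+
    ultimately show ?thesis by blast
  qed
  have "P 0 \<inter> Q 0 = H" unfolding P_def Q_def by simp
  then have S0: "H \<subseteq> generate G (\<Union>{P a \<inter> Q b | a b. a + b = 0})"
    by (auto intro: generate.incl)
  have W: "iter_comm G H D (M + M) \<subseteq> generate G (\<Union>{P a \<inter> Q b | a b. a + b = M + M})"
    using word_lemma[OF PN QN Cgc(1) Chc(1) hP hQ hT S0, where n = "M + M"] by simp
  have U: "\<Union>{P a \<inter> Q b | a b. a + b = M + M} \<subseteq> ?A <#> ?B"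
  proof
    fix x assume "x \<in> \<Union>{P a \<inter> Q b | a b. a + b = M + M}"
    then obtain a b where ab: "a + b = M + M" "x \<in> P a" "x \<in> Q b" by blast
    have oA: "\<one> \<in> ?A" using subgroup.one_closed[OF normal_imp_subgroup[OF AN(1)]] .
    have oB: "\<one> \<in> ?B" using subgroup.one_closed[OF normal_imp_subgroup[OF AN(2)]] .
    have xc: "x \<in> carrier G" using normal_sub[OF PN] ab(2) by auto
    show "x \<in> ?A <#> ?B"
    proof (cases "M \<le> a")
      case True
      have "P a = ?A" unfolding P_def eta_def Cg_def
        using stab_use[OF st Hc conj_class_sub[OF g] conj_class_ncl[OF g] True] .
      then have "x \<in> ?A" using ab(2) by simp
      then have "x \<otimes> \<one> \<in> ?A <#> ?B" using set_mult_memI oB by blast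
      then show ?thesis using xc by simp
    next
      case False
      then have Mb: "M \<le> b" using ab by simp
      have "Q b = ?B" unfolding Q_def eta_def Ch_def
        using stab_use[OF st Hc conj_class_sub[OF h] conj_class_ncl[OF h] Mb] .
      then have "x \<in> ?B" using ab(3) by simp
      then have "\<one> \<otimes> x \<in> ?A <#> ?B" using set_mult_memI oA by blast
      then show ?thesis using xc by simp
    qed
  qed
  have "eta G M (g \<otimes> h) H = iter_comm G H D (M + M)"
    unfolding eta_def D_def using stab_use[OF st Hc Dc[unfolded D_def], of "M + M"] by simp
  also have "\<dots> \<subseteq> ?A <#> ?B"
    using W generate_subgroup_incl[OF U ABsg] by (rule subset_trans)
  finally show ?thesis .
qed

lemma comm_sg_in_sub:
  assumes "subgroup P G" "S \<subseteq> P" "T \<subseteq> P"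
  shows "comm_sg G S T \<subseteq> P"
  unfolding comm_sg_def
proof (rule generate_subgroup_incl[OF _ assms(1)])
  show "{z. \<exists>x\<in>S. \<exists>y\<in>T. z = gcomm G x y} \<subseteq> P"
    using assms unfolding gcomm_def
    by (auto intro!: subgroup.m_closed[OF assms(1)] subgroup.m_inv_closed[OF assms(1)])
qed

lemma iter_comm_sub: "subgroup P G \<Longrightarrow> iter_comm G P P k \<subseteq> P"
  by (induction k) (auto intro: comm_sg_in_sub[THEN subsetD])

lemma iter_comm_one: "subgroup P G \<Longrightarrow> \<one> \<in> iter_comm G P P k"
  by (cases k) (auto simp: comm_sg_def intro: generate.one subgroup.one_closed)

lemma rho_normal: "N \<lhd> G \<Longrightarrow> rho G M N \<lhd> G"
  unfolding rho_def using iter_comm_normal normal_sub normal_ncl by blast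

lemma rho_pow_normal: "N \<lhd> G \<Longrightarrow> (rho G M ^^ i) N \<lhd> G"
  by (induction i) (auto intro: rho_normal)

lemma rho_sub: "N \<lhd> G \<Longrightarrow> rho G M N \<subseteq> N"
  unfolding rho_def using iter_comm_sub normal_imp_subgroup by blast

lemma rho_pow_sub: "N \<lhd> G \<Longrightarrow> (rho G M ^^ i) N \<subseteq> N"
proof (induction i)
  case (Suc i) then show ?case using rho_sub rho_pow_normal by fastforce
qed simp

lemma iter_comm_triv: "iter_comm G {\<one>} {\<one>} k = {\<one>}"
proof (induction k)
  case (Suc k)
  have "{z. \<exists>x\<in>{\<one>}. \<exists>y\<in>{\<one>}. z = gcomm G x y} = {\<one>}" using gcomm_one by auto
  then show ?case using Suc by (simp add: comm_sg_def generate_one)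
qed simp

lemma rho_pow_triv: "(rho G M ^^ i) {\<one>} = {\<one>}"
  by (induction i) (auto simp: rho_def iter_comm_triv)

lemma rho_pow_add: "(rho G M ^^ (i + j)) N = (rho G M ^^ i) ((rho G M ^^ j) N)"
  by (simp add: funpow_add)

lemma subgroup_of_sub:
  assumes "subgroup P G" "subgroup Z (G\<lparr>carrier := P\<rparr>)"
  shows "subgroup Z G"
proof -
  have ZP: "Z \<subseteq> P" using assms(2) subgroup.subset by fastforce
  show ?thesis
  proof
    show "Z \<subseteq> carrier G" using ZP assms(1) subgroup.subset by blast
    show "\<And>x y. x \<in> Z \<Longrightarrow> y \<in> Z \<Longrightarrow> x \<otimes> y \<in> Z" using subgroup.m_closed[OF assms(2)] by simp
    show "\<one> \<in> Z" using subgroup.one_closed[OF assms(2)] by simp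
    show "\<And>x. x \<in> Z \<Longrightarrow> inv x \<in> Z" using subgroup.m_inv_closed[OF assms(2)] ZP assms(1) by force
  qed
qed

lemma gcomm_consistent:
  assumes "subgroup P G" "x \<in> P" "y \<in> P"
  shows "gcomm (G\<lparr>carrier := P\<rparr>) x y = gcomm G x y"
  using assms unfolding gcomm_def by simp

lemma gcomm_sub_closed:
  assumes P: "subgroup P G" and x: "x \<in> P" and y: "y \<in> P"
  shows "gcomm G x y \<in> P"
  unfolding gcomm_def
  using subgroup.m_closed[OF P] subgroup.m_inv_closed[OF P] x y by metis

lemma lcs_quot:
  assumes P: "subgroup P G" and Q: "Q \<lhd> G\<lparr>carrier := P\<rparr>"
  shows "lcs (G\<lparr>carrier := P\<rparr> Mod Q) k = (\<lambda>x. Q #> x) ` iter_comm G P P k"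
proof -
  let ?Gp = "G\<lparr>carrier := P\<rparr>"
  let ?R = "?Gp Mod Q"
  let ?pi = "\<lambda>x. Q #> x"
  interpret Gp: group ?Gp using subgroup_imp_group[OF P] .
  interpret Qn: normal Q ?Gp using Q .
  have hom0: "(\<lambda>x. Q #>\<^bsub>?Gp\<^esub> x) \<in> hom ?Gp ?R" using Qn.r_coset_hom_Mod .
  have hom: "?pi \<in> hom ?Gp ?R" using hom0 by (simp only: r_coset_consistent)
  have gh: "group_hom ?Gp ?R ?pi"
    unfolding group_hom_def group_hom_axioms_def using hom Qn.factorgroup_is_group Gp.is_group by blast
  have carR: "carrier ?R = ?pi ` P"
  proof -
    have "carrier ?R = (\<Union>a\<in>P. {Q #>\<^bsub>?Gp\<^esub> a})" unfolding FactGroup_def RCOSETS_def by simp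
    then show ?thesis by (simp only: r_coset_consistent) blast
  qed
  show ?thesis
  proof (induction k)
    case 0 then show ?case using carR by simp
  next
    case (Suc k)
    let ?W = "{z. \<exists>x\<in>iter_comm G P P k. \<exists>y\<in>P. z = gcomm G x y}"
    have sub: "iter_comm G P P k \<subseteq> P" using iter_comm_sub[OF P] .
    have WP: "?W \<subseteq> P"
    proof
      fix z assume "z \<in> ?W"
      then obtain x y where "x \<in> iter_comm G P P k" "y \<in> P" "z = gcomm G x y" by blast
      then show "z \<in> P" using gcomm_sub_closed[OF P] sub by blast
    qed
    have pc: "gcomm ?R (?pi x) (?pi y) = ?pi (gcomm G x y)" if xy: "x \<in> P" "y \<in> P" for x y
    proof -
      have xc: "x \<in> carrier ?Gp" "y \<in> carrier ?Gp" using xy by simp_all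
      have "?pi (gcomm ?Gp x y) = gcomm ?R (?pi x) (?pi y)"
        unfolding gcomm_def
        using group_hom.hom_mult[OF gh] group_hom.hom_inv[OF gh] xc Gp.m_closed Gp.inv_closed
        by metis
      then show ?thesis using gcomm_consistent[OF P xy] by simp
    qed
    let ?LHS = "{z. \<exists>U1\<in>?pi ` iter_comm G P P k. \<exists>V1\<in>?pi ` P. z = gcomm ?R U1 V1}"
    have s1: "?LHS \<subseteq> ?pi ` ?W"
    proof
      fix z assume "z \<in> ?LHS"
      then obtain x y where xy: "x \<in> iter_comm G P P k" "y \<in> P" "z = gcomm ?R (?pi x) (?pi y)" by blast
      then have "z = ?pi (gcomm G x y)" using pc sub by blast
      moreover have "gcomm G x y \<in> ?W" using xy by blast
      ultimately show "z \<in> ?pi ` ?W" by blast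
    qed
    have s2: "?pi ` ?W \<subseteq> ?LHS"
    proof
      fix z assume "z \<in> ?pi ` ?W"
      then obtain x y where xy: "x \<in> iter_comm G P P k" "y \<in> P" "z = ?pi (gcomm G x y)" by blast
      then have "z = gcomm ?R (?pi x) (?pi y)" using pc sub by blast
      then show "z \<in> ?LHS" using xy by blast
    qed
    have seteq: "?LHS = ?pi ` ?W" using s1 s2 by (rule equalityI)
    have "lcs ?R (Suc k) = generate ?R (?pi ` ?W)"
      unfolding lcs.simps comm_sg_def Suc carR seteq ..
    also have "\<dots> = ?pi ` generate ?Gp ?W"
      using group_hom.generate_img[OF gh, of ?W] WP by simp
    also have "\<dots> = ?pi ` generate G ?W"
      using generate_consistent[OF WP P] by simp
    finally show ?case by (simp add: comm_sg_def)
  qed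
qed

lemma nilq_iff:
  assumes P: "subgroup P G" and Q: "Q \<lhd> G\<lparr>carrier := P\<rparr>"
  shows "nilpotent_grp (G\<lparr>carrier := P\<rparr> Mod Q) \<longleftrightarrow> (\<exists>k. iter_comm G P P k \<subseteq> Q)"
proof -
  interpret Gp: group "G\<lparr>carrier := P\<rparr>" using subgroup_imp_group P by blast
  interpret Qn: normal Q "G\<lparr>carrier := P\<rparr>" using Q .
  have QG: "subgroup Q G" using subgroup_of_sub[OF P] Qn.subgroup_axioms by blast
  have grp: "group (G\<lparr>carrier := P\<rparr> Mod Q)" using Qn.factorgroup_is_group .
  show ?thesis
  proof
    assume "nilpotent_grp (G\<lparr>carrier := P\<rparr> Mod Q)"
    then obtain k where k: "(\<lambda>x. Q #> x) ` iter_comm G P P k = {Q}"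
      unfolding nilpotent_grp_def using lcs_quot[OF P Q] by auto
    have "iter_comm G P P k \<subseteq> Q"
    proof
      fix x assume x: "x \<in> iter_comm G P P k"
      then have "Q #> x = Q" using k by blast
      moreover have "x \<in> carrier G" using x iter_comm_sub[OF P] P subgroup.subset by blast
      ultimately show "x \<in> Q" using rcos_self[OF _ QG] by metis
    qed
    then show "\<exists>k. iter_comm G P P k \<subseteq> Q" by blast
  next
    assume "\<exists>k. iter_comm G P P k \<subseteq> Q"
    then obtain k where k: "iter_comm G P P k \<subseteq> Q" by blast
    have "(\<lambda>x. Q #> x) ` iter_comm G P P k = {Q}"
      using k iter_comm_one[OF P, of k] subgroup.rcos_const[OF QG is_group] by blast
    then show "nilpotent_grp (G\<lparr>carrier := P\<rparr> Mod Q)"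
      unfolding nilpotent_grp_def using grp lcs_quot[OF P Q] by auto
  qed
qed


lemma iter_tail:
  assumes P: "subgroup P G" and Q: "Q \<lhd> G\<lparr>carrier := P\<rparr>" and k: "iter_comm G P P k \<subseteq> Q"
  shows "iter_comm G P P (m + k) \<subseteq> Q"
proof -
  interpret Gp: group "G\<lparr>carrier := P\<rparr>" using subgroup_imp_group[OF P] .
  interpret Qn: normal Q "G\<lparr>carrier := P\<rparr>" using Q .
  have QG: "subgroup Q G" using subgroup_of_sub[OF P Qn.subgroup_axioms] .
  have QP: "Q \<subseteq> P" using Qn.subset by simp
  have gc: "gcomm G x p \<in> Q" if x: "x \<in> Q" and p: "p \<in> P" for x p
  proof -
    have pc: "p \<in> carrier (G\<lparr>carrier := P\<rparr>)" using p by simp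
    have "inv\<^bsub>G\<lparr>carrier := P\<rparr>\<^esub> p \<otimes>\<^bsub>G\<lparr>carrier := P\<rparr>\<^esub> x \<otimes>\<^bsub>G\<lparr>carrier := P\<rparr>\<^esub> p \<in> Q"
      using Qn.inv_op_closed1[OF pc x] .
    then have 1: "inv p \<otimes> x \<otimes> p \<in> Q" using m_inv_consistent[OF P p] by simp
    have 2: "inv x \<in> Q" using subgroup.m_inv_closed[OF QG x] .
    have c: "x \<in> carrier G" "p \<in> carrier G" using x p QP subgroup.subset[OF P] by auto
    have e: "gcomm G x p = inv x \<otimes> (inv p \<otimes> x \<otimes> p)" using c by (simp add: gcomm_def m_assoc)
    show ?thesis unfolding e using subgroup.m_closed[OF QG 2 1] .
  qed
  show ?thesis
  proof (induction m)
    case 0 then show ?case using k by simp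
  next
    case (Suc m)
    have "{z. \<exists>x\<in>iter_comm G P P (m + k). \<exists>y\<in>P. z = gcomm G x y} \<subseteq> Q"
      using Suc gc by blast
    then have "comm_sg G (iter_comm G P P (m + k)) P \<subseteq> Q"
      unfolding comm_sg_def by (rule generate_subgroup_incl[OF _ QG])
    then show ?case by simp
  qed
qed

lemma series_to_rho:
  assumes st: "stab_const G M" and K: "K \<lhd> G" and ns: "nil_series (G\<lparr>carrier := K\<rparr>) S d"
  shows "(rho G M ^^ d) K = {\<one>}"
proof -
  have KG: "subgroup K G" using K normal_imp_subgroup by blast
  have S0: "S 0 = {\<one>}" and Sd: "S d = K"
    and Ssg: "\<And>i. i \<le> d \<Longrightarrow> subgroup (S i) (G\<lparr>carrier := K\<rparr>)"
    and Sn: "\<And>i. i < d \<Longrightarrow> S i \<lhd> G\<lparr>carrier := S (Suc i)\<rparr>"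
    and Snil: "\<And>i. i < d \<Longrightarrow> nilpotent_grp (G\<lparr>carrier := S (Suc i)\<rparr> Mod S i)"
    using ns unfolding nil_series_def by auto
  have SG: "\<And>i. i \<le> d \<Longrightarrow> subgroup (S i) G" using subgroup_of_sub[OF KG] Ssg by blast
  have main: "i \<le> d \<Longrightarrow> (rho G M ^^ i) K \<subseteq> S (d - i)" for i
  proof (induction i)
    case 0 then show ?case using Sd by simp
  next
    case (Suc i)
    define j where "j = d - Suc i"
    have j: "j < d" "Suc j = d - i" using Suc.prems unfolding j_def by auto
    let ?X = "(rho G M ^^ i) K"
    have XS: "?X \<subseteq> S (Suc j)" using Suc j by simp
    have XN: "?X \<lhd> G" using rho_pow_normal K by blast
    have P: "subgroup (S (Suc j)) G" using SG j by simp
    obtain k where k: "iter_comm G (S (Suc j)) (S (Suc j)) k \<subseteq> S j"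
      using nilq_iff[OF P Sn[OF j(1)]] Snil[OF j(1)] by blast
    have "(rho G M ^^ Suc i) K = iter_comm G ?X ?X M" by (simp add: rho_def)
    also have "\<dots> = iter_comm G ?X ?X (M + k)"
      using stab_use[OF st] XN normal_sub normal_ncl by (metis le_add1)
    also have "\<dots> \<subseteq> iter_comm G (S (Suc j)) (S (Suc j)) (M + k)" using iter_comm_mono XS by blast
    also have "\<dots> \<subseteq> S j" using iter_tail[OF P Sn[OF j(1)] k] .
    finally show ?case unfolding j_def by simp
  qed
  have "(rho G M ^^ d) K \<subseteq> {\<one>}" using main[of d] S0 by simp
  moreover have "\<one> \<in> (rho G M ^^ d) K"
    using rho_pow_normal[OF K] normal_imp_subgroup subgroup.one_closed by blast
  ultimately show ?thesis by blast
qed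

lemma rho_to_series:
  assumes K: "K \<lhd> G" and z: "(rho G M ^^ d) K = {\<one>}"
  shows "nil_series (G\<lparr>carrier := K\<rparr>) (\<lambda>i. (rho G M ^^ (d - i)) K) d"
  unfolding nil_series_def
proof (intro conjI allI impI)
  show "(rho G M ^^ (d - 0)) K = {\<one>\<^bsub>G\<lparr>carrier := K\<rparr>\<^esub>}" using z by simp
  show "(rho G M ^^ (d - d)) K = carrier (G\<lparr>carrier := K\<rparr>)" by simp
  have KG: "subgroup K G" using K by (rule normal_imp_subgroup)
  fix i
  show "subgroup ((rho G M ^^ (d - i)) K) (G\<lparr>carrier := K\<rparr>)" if "i \<le> d"
    using subgroup_incl[OF normal_imp_subgroup[OF rho_pow_normal[OF K]] KG rho_pow_sub[OF K]] .
  assume i: "i < d"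
  let ?X = "(rho G M ^^ (d - Suc i)) K"
  have di: "d - i = Suc (d - Suc i)" using i by arith
  have e: "(rho G M ^^ (d - i)) K = rho G M ?X" unfolding di by simp
  have XN: "?X \<lhd> G" using rho_pow_normal[OF K] .
  have XG: "subgroup ?X G" using XN by (rule normal_imp_subgroup)
  have RN: "rho G M ?X \<lhd> G\<lparr>carrier := ?X\<rparr>"
    using normal_restrict_supergroup[OF XG rho_normal[OF XN] rho_sub[OF XN]] .
  show "(rho G M ^^ (d - i)) K \<lhd> G\<lparr>carrier := K\<rparr>\<lparr>carrier := (rho G M ^^ (d - Suc i)) K\<rparr>"
    using RN unfolding e by simp
  have "iter_comm G ?X ?X M \<subseteq> rho G M ?X" unfolding rho_def by (rule subset_refl)
  then have "nilpotent_grp (G\<lparr>carrier := ?X\<rparr> Mod rho G M ?X)"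
    using nilq_iff[OF XG RN] by blast
  then show "nilpotent_grp (G\<lparr>carrier := K\<rparr>\<lparr>carrier := (rho G M ^^ (d - Suc i)) K\<rparr> Mod (rho G M ^^ (d - i)) K)"
    unfolding e by simp
qed

lemma FitL_le:
  assumes "K \<lhd> G" "(rho G M ^^ d) K = {\<one>}"
  shows "FitL (G\<lparr>carrier := K\<rparr>) \<le> enat d"
proof -
  have ex1: "\<exists>A. nil_series (G\<lparr>carrier := K\<rparr>) A d" using rho_to_series[OF assms] by blast
  then have ex: "\<exists>d A. nil_series (G\<lparr>carrier := K\<rparr>) A d" by blast
  have "(LEAST d. \<exists>A. nil_series (G\<lparr>carrier := K\<rparr>) A d) \<le> d" using ex1 by (rule Least_le)
  then show ?thesis unfolding FitL_def using ex by simp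
qed

lemma FitL_fin:
  assumes st: "stab_const G M" and K: "K \<lhd> G" and f: "FitL (G\<lparr>carrier := K\<rparr>) = enat d"
  shows "(rho G M ^^ d) K = {\<one>}"
proof -
  have ex: "\<exists>d A. nil_series (G\<lparr>carrier := K\<rparr>) A d"
  proof (rule ccontr)
    assume "\<not> (\<exists>d A. nil_series (G\<lparr>carrier := K\<rparr>) A d)"
    then have "FitL (G\<lparr>carrier := K\<rparr>) = \<infinity>" unfolding FitL_def by simp
    then show False using f by simp
  qed
  then have "enat (LEAST d. \<exists>A. nil_series (G\<lparr>carrier := K\<rparr>) A d) = enat d"
    using f unfolding FitL_def by simp
  then have dd: "d = (LEAST d. \<exists>A. nil_series (G\<lparr>carrier := K\<rparr>) A d)" by simp
  obtain d0 A0 where "nil_series (G\<lparr>carrier := K\<rparr>) A0 d0" using ex by blast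
  then have "\<exists>A. nil_series (G\<lparr>carrier := K\<rparr>) A (LEAST d. \<exists>A. nil_series (G\<lparr>carrier := K\<rparr>) A d)"
    by (rule LeastI[where P = "\<lambda>d. \<exists>A. nil_series (G\<lparr>carrier := K\<rparr>) A d", OF exI])
  then obtain A where "nil_series (G\<lparr>carrier := K\<rparr>) A d" using dd by auto
  then show ?thesis using series_to_rho[OF st K] by blast
qed


lemma carrier_normal: "carrier G \<lhd> G"
  using ncl_normal[OF subgroup_self] unfolding ncl_def by simp

lemma rho_prod:
  assumes st: "stab_const G M" and AN: "A \<lhd> G" and BN: "B \<lhd> G"
    and XN: "Y0 \<lhd> G" and XAB: "Y0 \<subseteq> A <#> B"
  shows "rho G M Y0 \<subseteq> rho G M A <#> rho G M B"
proof -
  define P where "P = (\<lambda>a. case a of 0 \<Rightarrow> carrier G | Suc j \<Rightarrow> iter_comm G A A j)"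
  define Q where "Q = (\<lambda>a. case a of 0 \<Rightarrow> carrier G | Suc j \<Rightarrow> iter_comm G B B j)"
  have Ac: "A \<subseteq> carrier G" "ncl A" using normal_sub[OF AN] normal_ncl[OF AN] by auto
  have Bc: "B \<subseteq> carrier G" "ncl B" using normal_sub[OF BN] normal_ncl[OF BN] by auto
  have PN: "\<And>a. P a \<lhd> G"
  proof -
    fix a show "P a \<lhd> G"
      by (cases a) (simp_all add: P_def carrier_normal iter_comm_normal[OF AN Ac])
  qed
  have QN: "\<And>a. Q a \<lhd> G"
  proof -
    fix a show "Q a \<lhd> G"
      by (cases a) (simp_all add: Q_def carrier_normal iter_comm_normal[OF BN Bc])
  qed
  have hP: "gcomm G x t \<in> P (Suc a)" if "x \<in> P a" "t \<in> A" for a x t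
  proof (cases a)
    case 0
    then have "x \<in> carrier G" using that(1) by (simp add: P_def)
    then show ?thesis using gcomm_in_normal2[OF AN _ that(2)] 0 by (simp add: P_def)
  next
    case (Suc j)
    then have "x \<in> iter_comm G A A j" using that(1) by (simp add: P_def)
    then have "gcomm G x t \<in> comm_sg G (iter_comm G A A j) A"
      unfolding comm_sg_def using that(2) by (blast intro: generate.incl)
    then show ?thesis using Suc by (simp add: P_def)
  qed
  have hQ: "gcomm G x t \<in> Q (Suc a)" if "x \<in> Q a" "t \<in> B" for a x t
  proof (cases a)
    case 0
    then have "x \<in> carrier G" using that(1) by (simp add: Q_def)
    then show ?thesis using gcomm_in_normal2[OF BN _ that(2)] 0 by (simp add: Q_def)
  next
    case (Suc j)
    then have "x \<in> iter_comm G B B j" using that(1) by (simp add: Q_def)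
    then have "gcomm G x t \<in> comm_sg G (iter_comm G B B j) B"
      unfolding comm_sg_def using that(2) by (blast intro: generate.incl)
    then show ?thesis using Suc by (simp add: Q_def)
  qed
  have hT: "\<exists>c\<in>A. \<exists>d\<in>B. t = c \<otimes> d" if "t \<in> A <#> B" for t
    using that unfolding set_mult_def by blast
  have S0: "A <#> B \<subseteq> generate G (\<Union>{P a \<inter> Q b | a b. a + b = 1})"
  proof
    fix t assume "t \<in> A <#> B"
    then obtain c d where cd: "c \<in> A" "d \<in> B" "t = c \<otimes> d" using hT by blast
    have "c \<in> P 1 \<inter> Q 0" using cd(1) Ac by (auto simp: P_def Q_def)
    moreover have "P 1 \<inter> Q 0 \<in> {P a \<inter> Q b | a b. a + b = 1}"
      by (rule CollectI, rule exI[of _ 1], rule exI[of _ 0]) simp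
    ultimately have c1: "c \<in> \<Union>{P a \<inter> Q b | a b. a + b = 1}" by (rule UnionI[rotated])
    have "d \<in> P 0 \<inter> Q 1" using cd(2) Bc by (auto simp: P_def Q_def)
    moreover have "P 0 \<inter> Q 1 \<in> {P a \<inter> Q b | a b. a + b = 1}"
      by (rule CollectI, rule exI[of _ 0], rule exI[of _ 1]) simp
    ultimately have d1: "d \<in> \<Union>{P a \<inter> Q b | a b. a + b = 1}" by (rule UnionI[rotated])
    show "t \<in> generate G (\<Union>{P a \<inter> Q b | a b. a + b = 1})"
      unfolding cd(3) using generate.eng[OF generate.incl[OF c1] generate.incl[OF d1]] .
  qed
  have W: "iter_comm G (A <#> B) (A <#> B) (M + M + 1)
      \<subseteq> generate G (\<Union>{P a \<inter> Q b | a b. a + b = 1 + (M + M + 1)})"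
    using word_lemma[OF PN QN Ac(1) Bc(1) hP hQ hT S0, where n = "M + M + 1"] .
  have RN: "rho G M A <#> rho G M B \<lhd> G"
    using normal_subgroup_set_mult_closed[OF rho_normal[OF AN] rho_normal[OF BN]] .
  have Rsg: "subgroup (rho G M A <#> rho G M B) G" using RN by (rule normal_imp_subgroup)
  have oA: "\<one> \<in> rho G M A" using subgroup.one_closed[OF normal_imp_subgroup[OF rho_normal[OF AN]]] .
  have oB: "\<one> \<in> rho G M B" using subgroup.one_closed[OF normal_imp_subgroup[OF rho_normal[OF BN]]] .
  have U: "\<Union>{P a \<inter> Q b | a b. a + b = 1 + (M + M + 1)} \<subseteq> rho G M A <#> rho G M B"
  proof
    fix x assume "x \<in> \<Union>{P a \<inter> Q b | a b. a + b = 1 + (M + M + 1)}"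
    then obtain a b where ab: "a + b = 1 + (M + M + 1)" "x \<in> P a" "x \<in> Q b" by blast
    show "x \<in> rho G M A <#> rho G M B"
    proof (cases "M + 1 \<le> a")
      case True
      define j where "j = a - 1"
      have j: "a = Suc j" "M \<le> j" using True unfolding j_def by arith+
      have "P a = iter_comm G A A j" using j by (simp add: P_def)
      also have "\<dots> = rho G M A" unfolding rho_def using stab_use[OF st Ac Ac j(2)] .
      finally have "x \<in> rho G M A" using ab(2) by simp
      then have m: "x \<otimes> \<one> \<in> rho G M A <#> rho G M B" by (rule set_mult_memI[OF _ oB])
      have "x \<in> carrier G" using ab(2) normal_sub[OF PN] by blast
      then have e: "x \<otimes> \<one> = x" by simp
      show ?thesis using m unfolding e .
    next
      case False
      define j where "j = b - 1"
      have j: "b = Suc j" "M \<le> j" using False ab(1) unfolding j_def by arith+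
      have "Q b = iter_comm G B B j" using j by (simp add: Q_def)
      also have "\<dots> = rho G M B" unfolding rho_def using stab_use[OF st Bc Bc j(2)] .
      finally have "x \<in> rho G M B" using ab(3) by simp
      then have m: "\<one> \<otimes> x \<in> rho G M A <#> rho G M B" by (rule set_mult_memI[OF oA])
      have "x \<in> carrier G" using ab(2) normal_sub[OF PN] by blast
      then have e: "\<one> \<otimes> x = x" by simp
      show ?thesis using m unfolding e .
    qed
  qed
  have Xc: "Y0 \<subseteq> carrier G" "ncl Y0" using normal_sub[OF XN] normal_ncl[OF XN] by auto
  have "rho G M Y0 = iter_comm G Y0 Y0 (M + M + 1)"
    unfolding rho_def using stab_use[OF st Xc Xc, of "M + M + 1"] by simp
  also have "\<dots> \<subseteq> iter_comm G (A <#> B) (A <#> B) (M + M + 1)"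
    using iter_comm_mono[OF XAB XAB] .
  also have "\<dots> \<subseteq> rho G M A <#> rho G M B"
    using W generate_subgroup_incl[OF U Rsg] by (rule subset_trans)
  finally show ?thesis .
qed


lemma rho_pow_prod:
  assumes st: "stab_const G M" and AN: "A \<lhd> G" and BN: "B \<lhd> G"
    and KN: "K \<lhd> G" and KAB: "K \<subseteq> A <#> B"
  shows "(rho G M ^^ i) K \<subseteq> (rho G M ^^ i) A <#> (rho G M ^^ i) B"
proof (induction i)
  case 0 then show ?case using KAB by simp
next
  case (Suc i)
  have "rho G M ((rho G M ^^ i) K) \<subseteq> rho G M ((rho G M ^^ i) A) <#> rho G M ((rho G M ^^ i) B)"
    using rho_prod[OF st rho_pow_normal[OF AN] rho_pow_normal[OF BN] rho_pow_normal[OF KN] Suc] .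
  then show ?case by simp
qed

lemma rho_pow_fin:
  assumes st: "stab_const G M" and AN: "A \<lhd> G" and f: "FitL (G\<lparr>carrier := A\<rparr>) = enat dA"
    and le: "dA \<le> d"
  shows "(rho G M ^^ d) A = {\<one>}"
proof -
  have "d = (d - dA) + dA" using le by simp
  then have "(rho G M ^^ d) A = (rho G M ^^ (d - dA)) ((rho G M ^^ dA) A)"
    by (metis rho_pow_add)
  also have "\<dots> = (rho G M ^^ (d - dA)) {\<one>}" using FitL_fin[OF st AN f] by simp
  also have "\<dots> = {\<one>}" by (rule rho_pow_triv)
  finally show ?thesis .
qed

lemma part3:
  assumes st: "stab_const G M" and AN: "A \<lhd> G" and BN: "B \<lhd> G"
    and KN: "K \<lhd> G" and KAB: "K \<subseteq> A <#> B"
  shows "FitL (G\<lparr>carrier := K\<rparr>) \<le> max (FitL (G\<lparr>carrier := A\<rparr>)) (FitL (G\<lparr>carrier := B\<rparr>))"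
proof (cases "FitL (G\<lparr>carrier := A\<rparr>) = \<infinity> \<or> FitL (G\<lparr>carrier := B\<rparr>) = \<infinity>")
  case True
  then show ?thesis by auto
next
  case False
  then obtain dA dB where fA: "FitL (G\<lparr>carrier := A\<rparr>) = enat dA"
    and fB: "FitL (G\<lparr>carrier := B\<rparr>) = enat dB" by auto
  define d where "d = max dA dB"
  have zA: "(rho G M ^^ d) A = {\<one>}" using rho_pow_fin[OF st AN fA] unfolding d_def by simp
  have zB: "(rho G M ^^ d) B = {\<one>}" using rho_pow_fin[OF st BN fB] unfolding d_def by simp
  have "(rho G M ^^ d) K \<subseteq> {\<one>} <#> {\<one>}"
    using rho_pow_prod[OF st AN BN KN KAB, of d] zA zB by simp
  also have "{\<one>} <#> {\<one>} = {\<one>}" unfolding set_mult_def by simp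
  finally have "(rho G M ^^ d) K \<subseteq> {\<one>}" .
  moreover have "\<one> \<in> (rho G M ^^ d) K"
    using subgroup.one_closed[OF normal_imp_subgroup[OF rho_pow_normal[OF KN]]] .
  ultimately have "(rho G M ^^ d) K = {\<one>}" by blast
  then have "FitL (G\<lparr>carrier := K\<rparr>) \<le> enat d" by (rule FitL_le[OF KN])
  then show ?thesis unfolding fA fB d_def by simp
qed

end

theorem lemma4p1:
  fixes G (structure) and H :: "'a set" and g h :: 'a and M :: nat
  assumes "group G" and "finite (carrier G)"
    and "H \<lhd> G"
    and "g \<in> carrier G" and "h \<in> carrier G"
    and "stab_const G M"
  shows "eta G M g (eta G M g H) = eta G M g H
    \<and> eta G M (g \<otimes> h) H \<subseteq> eta G M g H <#> eta G M h H
    \<and> FitL (G\<lparr>carrier := eta G M (g \<otimes> h) H\<rparr>)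
           \<le> max (FitL (G\<lparr>carrier := eta G M g H\<rparr>)) (FitL (G\<lparr>carrier := eta G M h H\<rparr>))"
proof -
  interpret group G by (rule assms(1))
  have p1: "eta G M g (eta G M g H) = eta G M g H" using part1[OF assms(3) assms(4) assms(6)] .
  have p2: "eta G M (g \<otimes> h) H \<subseteq> eta G M g H <#> eta G M h H"
    using part2[OF assms(3) assms(4) assms(5) assms(6)] .
  have N: "eta G M x H \<lhd> G" if "x \<in> carrier G" for x
    unfolding eta_def using iter_comm_normal[OF assms(3) conj_class_sub[OF that] conj_class_ncl[OF that]] .
  have gh: "g \<otimes> h \<in> carrier G" using assms(4,5) by simp
  have p3: "FitL (G\<lparr>carrier := eta G M (g \<otimes> h) H\<rparr>)
           \<le> max (FitL (G\<lparr>carrier := eta G M g H\<rparr>)) (FitL (G\<lparr>carrier := eta G M h H\<rparr>))"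
    using part3[OF assms(6) N[OF assms(4)] N[OF assms(5)] N[OF gh] p2] .
  show ?thesis using p1 p2 p3 by blast
qed

end
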